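(* Let $\alpha$ be a cylindric partition on $\mathcal C_{k,n}$ and $t$ a nonnegative integer. The number of marble games with $t$ turns that start with the arrangement $\operatorname{Arr}(\alpha)$ equals the number of marble games with $t$ turns that end with the arrangement $\operatorname{Arr}(\alpha)$, which in turn equals the number of marble games with $t$ turns that start with $\operatorname{Arr}(\alpha)$ but in which marbles are passed counterclockwise (each $p_i$ passes to $p_{i-1}$). These equalities remain true if every turn is restricted so that exactly one marble changes hands on every turn.
   Context: Fix integers $n>k\ge1$. A cylindric partition is a weakly decreasing integer sequence $(\alpha_m)_{m\in\mathbb Z}$ with $\alpha_m=\alpha_{m+k}+n-k$. There are $k$ people $p_0,\dots,p_{k-1}$ in a circle, indices taken mod $k$, with $p_{i+1}$ the clockwise neighbour of $p_i$. The arrangement $\operatorname{Arr}(\alpha)$ gives $p_i$ exactly $\alpha_{i-1}-\alpha_i$ marbles ($n-k$ marbles in total). A (clockwise) turn is a tuple $(a_0,\dots,a_{k-1})$ of nonnegative integers in which simultaneously each $p_i$ passes $a_i$ marbles to $p_{i+1}$, where $a_i$ is at most the number of marbles $p_i$ holds before the turn. A marble game with $t$ turns is an initial arrangement of the $n-k$ marbles together with a sequence of $t$ successive valid turns; it ends with the arrangement obtained after the last turn. *)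

theory Defs
  imports Main
begin

definition cylindric :: "nat \<Rightarrow> nat \<Rightarrow> (int \<Rightarrow> int) \<Rightarrow> bool" where
  "cylindric k n \<alpha> \<longleftrightarrow> (\<forall>m. \<alpha> (m + 1) \<le> \<alpha> m) \<and>
     (\<forall>m. \<alpha> m = \<alpha> (m + int k) + (int n - int k))"

text \<open>Arrangements of marbles among people p_0..p_{k-1}: lists of length k,
  entry i = number of marbles of p_i.\<close>
definition Arr :: "nat \<Rightarrow> (int \<Rightarrow> int) \<Rightarrow> nat list" where
  "Arr k \<alpha> = map (\<lambda>i. nat (\<alpha> (int i - 1) - \<alpha> (int i))) [0..<k]"

definition valid_turn :: "nat list \<Rightarrow> nat list \<Rightarrow> bool" where
  "valid_turn c a \<longleftrightarrow> length a = length c \<and> (\<forall>i<length c. a ! i \<le> c ! i)"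

text \<open>Effect of a turn. cw = True: p_i passes to p_{i+1} (clockwise);
  cw = False: p_i passes to p_{i-1} (counterclockwise). Indices mod k.\<close>
definition step :: "bool \<Rightarrow> nat list \<Rightarrow> nat list \<Rightarrow> nat list" where
  "step cw c a = (let k = length c in
     map (\<lambda>i. c ! i - a ! i + a ! (if cw then (i + k - 1) mod k else (i + 1) mod k)) [0..<k])"

fun valid_game :: "bool \<Rightarrow> (nat list \<Rightarrow> bool) \<Rightarrow> nat list \<Rightarrow> nat list list \<Rightarrow> bool" where
  "valid_game cw P c [] = True"
| "valid_game cw P c (a # as) = (valid_turn c a \<and> P a \<and> valid_game cw P (step cw c a) as)"

fun final_arr :: "bool \<Rightarrow> nat list \<Rightarrow> nat list list \<Rightarrow> nat list" where
  "final_arr cw c [] = c"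
| "final_arr cw c (a # as) = final_arr cw (step cw c a) as"

definition games :: "nat \<Rightarrow> nat \<Rightarrow> bool \<Rightarrow> (nat list \<Rightarrow> bool) \<Rightarrow> nat \<Rightarrow> (nat list \<times> nat list list) set" where
  "games k n cw P t = {(c, as). length c = k \<and> sum_list c = n - k \<and> length as = t \<and> valid_game cw P c as}"

definition games_starting :: "nat \<Rightarrow> nat \<Rightarrow> bool \<Rightarrow> (nat list \<Rightarrow> bool) \<Rightarrow> nat \<Rightarrow> nat list \<Rightarrow> (nat list \<times> nat list list) set" where
  "games_starting k n cw P t c0 = {g \<in> games k n cw P t. fst g = c0}"

definition games_ending :: "nat \<Rightarrow> nat \<Rightarrow> bool \<Rightarrow> (nat list \<Rightarrow> bool) \<Rightarrow> nat \<Rightarrow> nat list \<Rightarrow> (nat list \<times> nat list list) set" where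
  "games_ending k n cw P t c1 = {g \<in> games k n cw P t. final_arr cw (fst g) (snd g) = c1}"

definition one_marble :: "nat list \<Rightarrow> bool" where
  "one_marble a \<longleftrightarrow> sum_list a = 1"

end

theory Submission imports Defs begin

definition S :: "bool \<Rightarrow> (nat list \<Rightarrow> bool) \<Rightarrow> nat \<Rightarrow> nat list \<Rightarrow> nat list list set" where
  "S cw P t c = {as. length as = t \<and> valid_game cw P c as}"
definition T :: "(nat list \<Rightarrow> bool) \<Rightarrow> nat list \<Rightarrow> nat list set" where
  "T P c = {a. valid_turn c a \<and> P a}"
definition N :: "bool \<Rightarrow> (nat list \<Rightarrow> bool) \<Rightarrow> nat \<Rightarrow> nat list \<Rightarrow> nat" where
  "N cw P t c = card (S cw P t c)"

lemma finite_T: "finite (T P c)"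
proof (rule finite_subset)
  show "T P c \<subseteq> {a. set a \<subseteq> {..sum_list c} \<and> length a = length c}"
  proof
    fix a assume "a \<in> T P c"
    hence v: "length a = length c" "\<forall>i<length c. a ! i \<le> c ! i" by (auto simp: T_def valid_turn_def)
    have "set a \<subseteq> {..sum_list c}"
    proof
      fix x assume "x \<in> set a"
      then obtain i where "i < length a" "a ! i = x" by (auto simp: in_set_conv_nth)
      thus "x \<in> {..sum_list c}" using v elem_le_sum_list[of i c] by fastforce
    qed
    thus "a \<in> {a. set a \<subseteq> {..sum_list c} \<and> length a = length c}" using v by auto
  qed
  show "finite {a. set a \<subseteq> {..sum_list c} \<and> length a = length c}"
    by (rule finite_lists_length_eq) simp
qed

lemma S_0: "S cw P 0 c = {[]}" by (auto simp: S_def)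

lemma S_Suc: "S cw P (Suc t) c = (\<Union>a\<in>T P c. (Cons a) ` S cw P t (step cw c a))"
  by (auto simp: S_def T_def length_Suc_conv)

lemma finite_S: "finite (S cw P t c)"
  by (induction t arbitrary: c) (auto simp: S_0 S_Suc finite_T)

lemma N_0: "N cw P 0 c = 1" by (simp add: N_def S_0)

lemma N_Suc: "N cw P (Suc t) c = (\<Sum>a\<in>T P c. N cw P t (step cw c a))"
proof -
  have "N cw P (Suc t) c = (\<Sum>a\<in>T P c. card ((Cons a) ` S cw P t (step cw c a)))"
    unfolding N_def S_Suc
    by (rule card_UN_disjoint) (auto simp: finite_T finite_S)
  also have "\<dots> = (\<Sum>a\<in>T P c. N cw P t (step cw c a))"
    by (rule sum.cong) (auto simp: N_def card_image)
  finally show ?thesis .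
qed

definition sc :: "nat \<Rightarrow> nat \<Rightarrow> nat" where "sc k i = (i + 1) mod k"
definition pd :: "nat \<Rightarrow> nat \<Rightarrow> nat" where "pd k i = (i + k - 1) mod k"

lemma sc_lt: "i < k \<Longrightarrow> sc k j < k" by (simp add: sc_def)
lemma pd_lt: "i < k \<Longrightarrow> pd k j < k" by (simp add: pd_def)
lemma sc_pd: "i < k \<Longrightarrow> sc k (pd k i) = i"
proof (cases "i = 0")
  case True
  assume "i < k"
  hence "(k - 1) mod k = k - 1" by simp
  thus ?thesis using True \<open>i < k\<close> by (simp add: sc_def pd_def)
next
  case False
  assume "i < k"
  hence "(i + k - 1) mod k = i - 1" using False
    by (metis Nat.add_diff_assoc2 One_nat_def Suc_leI less_imp_diff_less mod_add_self2 mod_less neq0_conv)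
  thus ?thesis using False \<open>i < k\<close> by (simp add: sc_def pd_def)
qed
lemma pd_sc: "i < k \<Longrightarrow> pd k (sc k i) = i"
proof (cases "i + 1 = k")
  case True
  assume "i < k"
  thus ?thesis using True by (simp add: sc_def pd_def)
next
  case False
  assume "i < k"
  hence "sc k i = i + 1" using False by (simp add: sc_def)
  moreover have "(i + 1 + k - 1) mod k = i" using \<open>i < k\<close> by simp
  ultimately show ?thesis by (simp add: pd_def)
qed

lemma perm_sc_pd: "i < k \<Longrightarrow> pd k i < k \<and> sc k i < k \<and> pd k (sc k i) = i \<and> sc k (pd k i) = i"
  by (simp add: pd_lt sc_lt sc_pd pd_sc)
lemma perm_pd_sc: "i < k \<Longrightarrow> sc k i < k \<and> pd k i < k \<and> sc k (pd k i) = i \<and> pd k (sc k i) = i"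
  by (simp add: pd_lt sc_lt sc_pd pd_sc)

lemma sum_list_map_upt: "sum_list (map f [0..<k]) = (\<Sum>i<k. f i)"
  by (simp add: sum_set_upt_conv_sum_list_nat[symmetric] atLeast0LessThan)

lemma sum_perm:
  assumes "\<And>i. i < k \<Longrightarrow> \<sigma> i < k \<and> \<tau> i < k \<and> \<sigma> (\<tau> i) = i \<and> \<tau> (\<sigma> i) = i"
  shows "(\<Sum>i<k. f (\<sigma> i)) = (\<Sum>i<k. (f i :: 'a::comm_monoid_add))"
  by (rule sum.reindex_bij_witness[where i=\<tau> and j=\<sigma>]) (use assms in auto)

lemma length_step[simp]: "length (step cw c a) = length c"
  by (simp add: step_def Let_def)

lemma nth_step: "i < length c \<Longrightarrow> step cw c a ! i =
   c ! i - a ! i + a ! (if cw then pd (length c) i else sc (length c) i)"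
  by (simp add: step_def Let_def sc_def pd_def)

lemma sum_list_step:
  assumes "valid_turn c a"
  shows "sum_list (step cw c a) = sum_list c"
proof -
  let ?k = "length c"
  let ?s = "\<lambda>i. if cw then pd ?k i else sc ?k i"
  have le: "\<And>i. i < ?k \<Longrightarrow> a ! i \<le> c ! i" using assms by (simp add: valid_turn_def)
  have "sum_list (step cw c a) = (\<Sum>i<?k. c ! i - a ! i + a ! ?s i)"
    by (simp add: sum_list_sum_nth nth_step atLeast0LessThan)
  also have "\<dots> = (\<Sum>i<?k. c ! i - a ! i) + (\<Sum>i<?k. a ! ?s i)" by (simp add: sum.distrib)
  also have "(\<Sum>i<?k. a ! ?s i) = (\<Sum>i<?k. a ! i)"
  proof (cases cw)
    case True thus ?thesis
      using sum_perm[of ?k "pd ?k" "sc ?k" "\<lambda>i. a ! i", OF perm_sc_pd] by simp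
  next
    case False thus ?thesis
      using sum_perm[of ?k "sc ?k" "pd ?k" "\<lambda>i. a ! i", OF perm_pd_sc] by simp
  qed
  also have "(\<Sum>i<?k. c ! i - a ! i) + (\<Sum>i<?k. a ! i) = (\<Sum>i<?k. c ! i)"
    by (simp add: sum.distrib[symmetric] le)
  finally show ?thesis by (simp add: sum_list_sum_nth atLeast0LessThan)
qed


definition rv :: "nat list \<Rightarrow> nat list" where
  "rv a = map (\<lambda>i. a ! pd (length a) i) [0..<length a]"
definition rv' :: "nat list \<Rightarrow> nat list" where
  "rv' a = map (\<lambda>i. a ! sc (length a) i) [0..<length a]"

lemma length_rv[simp]: "length (rv a) = length a" by (simp add: rv_def)
lemma length_rv'[simp]: "length (rv' a) = length a" by (simp add: rv'_def)
lemma nth_rv: "i < length a \<Longrightarrow> rv a ! i = a ! pd (length a) i" by (simp add: rv_def)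
lemma nth_rv': "i < length a \<Longrightarrow> rv' a ! i = a ! sc (length a) i" by (simp add: rv'_def)

lemma rv'_rv[simp]: "rv' (rv a) = a"
  by (rule nth_equalityI) (auto simp: nth_rv nth_rv' sc_lt pd_sc)
lemma rv_rv'[simp]: "rv (rv' a) = a"
  by (rule nth_equalityI) (auto simp: nth_rv nth_rv' pd_lt sc_pd)

lemma sum_list_perm:
  fixes a :: "'a::comm_monoid_add list"
  assumes "\<And>i. i < length a \<Longrightarrow> \<sigma> i < length a \<and> \<tau> i < length a \<and> \<sigma> (\<tau> i) = i \<and> \<tau> (\<sigma> i) = i"
  shows "sum_list (map (\<lambda>i. a ! \<sigma> i) [0..<length a]) = sum_list a"
  using sum_perm[of "length a" \<sigma> \<tau> "\<lambda>i. a ! i", OF assms]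
  by (simp add: sum_list_map_upt sum_list_sum_nth atLeast0LessThan)

lemma sum_list_rv[simp]: "sum_list (rv a) = sum_list a"
  unfolding rv_def by (rule sum_list_perm[OF perm_sc_pd])
lemma sum_list_rv'[simp]: "sum_list (rv' a) = sum_list a"
  unfolding rv'_def by (rule sum_list_perm[OF perm_pd_sc])

definition goodP :: "(nat list \<Rightarrow> bool) \<Rightarrow> bool" where
  "goodP P \<longleftrightarrow> P = (\<lambda>a. True) \<or> P = one_marble"

lemma goodP_sum: "goodP P \<Longrightarrow> sum_list a = sum_list b \<Longrightarrow> P a = P b"
  by (auto simp: goodP_def one_marble_def)

lemma rv_turn:
  assumes "valid_turn c a"
  shows "valid_turn (step True c a) (rv a) \<and> step False (step True c a) (rv a) = c"
proof -
  have l: "length a = length c" and le: "\<And>i. i < length c \<Longrightarrow> a ! i \<le> c ! i"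
    using assms by (auto simp: valid_turn_def)
  have "\<forall>i<length c. rv a ! i \<le> step True c a ! i"
  proof (intro allI impI)
    fix i assume i: "i < length c"
    from le[OF i] show "rv a ! i \<le> step True c a ! i" by (simp add: nth_step nth_rv i l)
  qed
  hence v: "valid_turn (step True c a) (rv a)"
    unfolding valid_turn_def using l by simp
  have "step False (step True c a) (rv a) = c"
    by (rule nth_equalityI) (auto simp: nth_step nth_rv l le pd_lt sc_lt pd_sc)
  thus ?thesis using v by simp
qed

lemma rv'_turn:
  assumes "valid_turn c a"
  shows "valid_turn (step False c a) (rv' a) \<and> step True (step False c a) (rv' a) = c"
proof -
  have l: "length a = length c" and le: "\<And>i. i < length c \<Longrightarrow> a ! i \<le> c ! i"
    using assms by (auto simp: valid_turn_def)
  have "\<forall>i<length c. rv' a ! i \<le> step False c a ! i"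
  proof (intro allI impI)
    fix i assume i: "i < length c"
    from le[OF i] show "rv' a ! i \<le> step False c a ! i" by (simp add: nth_step nth_rv' i l)
  qed
  hence v: "valid_turn (step False c a) (rv' a)"
    unfolding valid_turn_def using l by simp
  have "step True (step False c a) (rv' a) = c"
    by (rule nth_equalityI) (auto simp: nth_step nth_rv' l le pd_lt sc_lt sc_pd)
  thus ?thesis using v by simp
qed

lemma valid_game_append:
  "valid_game cw P c (xs @ ys) = (valid_game cw P c xs \<and> valid_game cw P (final_arr cw c xs) ys)"
  by (induction xs arbitrary: c) auto
lemma final_arr_append:
  "final_arr cw c (xs @ ys) = final_arr cw (final_arr cw c xs) ys"
  by (induction xs arbitrary: c) auto
lemma length_final[simp]: "length (final_arr cw c as) = length c"
  by (induction as arbitrary: c) auto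
lemma sum_final: "valid_game cw P c as \<Longrightarrow> sum_list (final_arr cw c as) = sum_list c"
  by (induction as arbitrary: c) (auto simp: sum_list_step)

lemma RevF:
  "goodP P \<Longrightarrow> valid_game True P c as \<Longrightarrow>
   valid_game False P (final_arr True c as) (rev (map rv as)) \<and>
   final_arr False (final_arr True c as) (rev (map rv as)) = c"
proof (induction as arbitrary: c)
  case Nil thus ?case by simp
next
  case (Cons a as)
  hence v: "valid_turn c a" "P a" "valid_game True P (step True c a) as" by auto
  note IH = Cons.IH[OF Cons.prems(1) v(3)]
  have "P (rv a)" using v(2) goodP_sum[OF Cons.prems(1), of "rv a" a] by simp
  thus ?case using IH rv_turn[OF v(1)]
    by (simp add: valid_game_append final_arr_append)
qed

lemma RevB:
  "goodP P \<Longrightarrow> valid_game False P c as \<Longrightarrow>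
   valid_game True P (final_arr False c as) (rev (map rv' as)) \<and>
   final_arr True (final_arr False c as) (rev (map rv' as)) = c"
proof (induction as arbitrary: c)
  case Nil thus ?case by simp
next
  case (Cons a as)
  hence v: "valid_turn c a" "P a" "valid_game False P (step False c a) as" by auto
  note IH = Cons.IH[OF Cons.prems(1) v(3)]
  have "P (rv' a)" using v(2) goodP_sum[OF Cons.prems(1), of "rv' a" a] by simp
  thus ?case using IH rv'_turn[OF v(1)]
    by (simp add: valid_game_append final_arr_append)
qed

lemma map_rv'_rv: "rev (map rv' (rev (map rv as))) = as" by (induction as) auto
lemma map_rv_rv': "rev (map rv (rev (map rv' as))) = as" by (induction as) auto

lemma starting_eq:
  assumes "length c0 = k" "sum_list c0 = n - k"
  shows "card (games_starting k n cw P t c0) = N cw P t c0"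
proof -
  have "games_starting k n cw P t c0 = Pair c0 ` S cw P t c0"
  proof (rule set_eqI)
    fix x :: "nat list \<times> nat list list"
    show "x \<in> games_starting k n cw P t c0 \<longleftrightarrow> x \<in> Pair c0 ` S cw P t c0"
      by (cases x) (auto simp: games_starting_def games_def S_def assms)
  qed
  thus ?thesis by (simp add: N_def card_image inj_on_def)
qed

lemma ending_eq:
  assumes "length c0 = k" "sum_list c0 = n - k" "goodP P"
  shows "card (games_ending k n True P t c0) = N False P t c0"
proof -
  let ?f = "\<lambda>g. rev (map rv (snd g))"
  let ?g = "\<lambda>bs. (final_arr False c0 bs, rev (map rv' bs))"
  have E: "x \<in> games_ending k n True P t c0 \<longleftrightarrow> (length (fst x) = k \<and> sum_list (fst x) = n - k \<and>
     length (snd x) = t \<and> valid_game True P (fst x) (snd x) \<and> final_arr True (fst x) (snd x) = c0)" for x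
    by (cases x) (simp add: games_ending_def games_def)
  have "bij_betw ?f (games_ending k n True P t c0) (S False P t c0)"
  proof (rule bij_betw_byWitness[where f'="?g"])
    show "\<forall>x\<in>games_ending k n True P t c0. ?g (?f x) = x"
    proof
      fix x assume "x \<in> games_ending k n True P t c0"
      hence h: "valid_game True P (fst x) (snd x)" "final_arr True (fst x) (snd x) = c0" by (simp_all add: E)
      from RevF[OF assms(3) h(1)] h(2) show "?g (?f x) = x"
        by (cases x) (simp only: map_rv'_rv fst_conv snd_conv)
    qed
    show "\<forall>x\<in>S False P t c0. ?f (?g x) = x"
      by (simp only: map_rv_rv' snd_conv) simp
    show "?f ` games_ending k n True P t c0 \<subseteq> S False P t c0"
    proof
      fix y assume "y \<in> ?f ` games_ending k n True P t c0"
      then obtain x where x: "x \<in> games_ending k n True P t c0" "y = ?f x" by blast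
      hence h: "valid_game True P (fst x) (snd x)" "final_arr True (fst x) (snd x) = c0" "length (snd x) = t"
        by (simp_all add: E)
      from RevF[OF assms(3) h(1)] h x(2) show "y \<in> S False P t c0"
        by (simp add: S_def)
    qed
    show "?g ` S False P t c0 \<subseteq> games_ending k n True P t c0"
    proof
      fix y assume "y \<in> ?g ` S False P t c0"
      then obtain bs where b: "bs \<in> S False P t c0" "y = ?g bs" by blast
      hence h: "valid_game False P c0 bs" "length bs = t" by (simp_all add: S_def)
      have "sum_list (final_arr False c0 bs) = n - k" using sum_final[OF h(1)] assms(2) by simp
      with RevB[OF assms(3) h(1)] h b(2) assms(1) show "y \<in> games_ending k n True P t c0"
        by (simp add: E)
    qed
  qed
  thus ?thesis by (simp add: N_def bij_betw_same_card)
qed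


definition ng :: "nat \<Rightarrow> nat \<Rightarrow> nat" where "ng k j = (k - j) mod k"

lemma pd_val: "j < k \<Longrightarrow> pd k j = (if j = 0 then k - 1 else j - 1)"
proof (cases "j = 0")
  case True assume "j < k" thus ?thesis using True by (simp add: pd_def)
next
  case False assume "j < k"
  have "j + k - 1 = (j - 1) + k" using False by simp
  hence "(j + k - 1) mod k = (j - 1) mod k" by simp
  also have "\<dots> = j - 1" using \<open>j < k\<close> by simp
  finally show ?thesis using False by (simp add: pd_def)
qed
lemma sc_val: "j < k \<Longrightarrow> sc k j = (if j + 1 = k then 0 else j + 1)"
  unfolding sc_def by auto
lemma ng_val: "j < k \<Longrightarrow> ng k j = (if j = 0 then 0 else k - j)"
  unfolding ng_def by auto
lemma ng_lt: "j < k \<Longrightarrow> ng k j < k" by (simp add: ng_val)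
lemma ng_ng: "j < k \<Longrightarrow> ng k (ng k j) = j" by (simp add: ng_val)
lemma ng_pd: "j < k \<Longrightarrow> ng k (pd k j) = sc k (ng k j)"
  by (auto simp: ng_val pd_val sc_val)
lemma perm_ng: "j < k \<Longrightarrow> ng k j < k \<and> ng k j < k \<and> ng k (ng k j) = j \<and> ng k (ng k j) = j"
  by (simp add: ng_lt ng_ng)

definition rfl :: "nat list \<Rightarrow> nat list" where
  "rfl a = map (\<lambda>i. a ! ng (length a) i) [0..<length a]"
lemma length_rfl[simp]: "length (rfl a) = length a" by (simp add: rfl_def)
lemma nth_rfl: "i < length a \<Longrightarrow> rfl a ! i = a ! ng (length a) i" by (simp add: rfl_def)
lemma rfl_rfl[simp]: "rfl (rfl a) = a"
  by (rule nth_equalityI) (auto simp: nth_rfl ng_lt ng_ng)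
lemma sum_list_rfl[simp]: "sum_list (rfl a) = sum_list a"
  unfolding rfl_def by (rule sum_list_perm[OF perm_ng])

definition df :: "nat list \<Rightarrow> nat list \<Rightarrow> nat list" where
  "df c a = map (\<lambda>i. c ! i - a ! i) [0..<length c]"
lemma length_df[simp]: "length (df c a) = length c" by (simp add: df_def)
lemma nth_df: "i < length c \<Longrightarrow> df c a ! i = c ! i - a ! i" by (simp add: df_def)

lemma T_iff: "a \<in> T P c \<longleftrightarrow> length a = length c \<and> (\<forall>i<length c. a ! i \<le> c ! i) \<and> P a"
  by (simp add: T_def valid_turn_def)

lemma step_rv: "length a = length c \<Longrightarrow> step True (rv c) (rv a) = rv (step True c a)"
  by (rule nth_equalityI) (auto simp: nth_step nth_rv pd_lt)

lemma N_rv: "goodP P \<Longrightarrow> N True P t (rv c) = N True P t c"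
proof (induction t arbitrary: c)
  case 0 thus ?case by (simp add: N_0)
next
  case (Suc t)
  show ?case unfolding N_Suc
  proof (rule sum.reindex_bij_witness[where i=rv' and j=rv, symmetric])
    fix a assume a: "a \<in> T P c"
    show "rv' (rv a) = a" by simp
    show "rv a \<in> T P (rv c)"
      using a goodP_sum[OF Suc.prems, of "rv a" a] by (auto simp: T_iff nth_rv pd_lt)
    show "N True P t (step True (rv c) (rv a)) = N True P t (step True c a)"
      using a Suc.IH[OF Suc.prems] by (simp add: T_iff step_rv)
  next
    fix b assume b: "b \<in> T P (rv c)"
    show "rv (rv' b) = b" by simp
    have "\<forall>i<length c. rv' b ! i \<le> c ! i"
    proof (intro allI impI)
      fix i assume i: "i < length c"
      have "b ! sc (length c) i \<le> rv c ! sc (length c) i"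
        using b i by (simp add: T_iff sc_lt)
      thus "rv' b ! i \<le> c ! i" using b i by (simp add: T_iff nth_rv nth_rv' sc_lt pd_sc)
    qed
    thus "rv' b \<in> T P c"
      using b goodP_sum[OF Suc.prems, of "rv' b" b] by (auto simp: T_iff)
  qed
qed

lemma step_rfl: "length a = length c \<Longrightarrow> step True (rfl c) (rfl a) = rfl (step False c a)"
  by (rule nth_equalityI) (auto simp: nth_step nth_rfl pd_lt ng_lt ng_pd)

lemma N_rfl: "goodP P \<Longrightarrow> N False P t c = N True P t (rfl c)"
proof (induction t arbitrary: c)
  case 0 thus ?case by (simp add: N_0)
next
  case (Suc t)
  show ?case unfolding N_Suc
  proof (rule sum.reindex_bij_witness[where i=rfl and j=rfl])
    fix a assume a: "a \<in> T P c"
    show "rfl (rfl a) = a" by simp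
    show "rfl a \<in> T P (rfl c)"
      using a goodP_sum[OF Suc.prems, of "rfl a" a] by (auto simp: T_iff nth_rfl ng_lt)
    show "N True P t (step True (rfl c) (rfl a)) = N False P t (step False c a)"
      using a Suc.IH[OF Suc.prems] by (simp add: T_iff step_rfl)
  next
    fix b assume b: "b \<in> T P (rfl c)"
    show "rfl (rfl b) = b" by simp
    have "\<forall>i<length c. rfl b ! i \<le> c ! i"
    proof (intro allI impI)
      fix i assume i: "i < length c"
      have "b ! ng (length c) i \<le> rfl c ! ng (length c) i"
        using b i by (simp add: T_iff ng_lt)
      thus "rfl b ! i \<le> c ! i" using b i by (simp add: T_iff nth_rfl ng_lt ng_ng)
    qed
    thus "rfl b \<in> T P c"
      using b goodP_sum[OF Suc.prems, of "rfl b" b] by (auto simp: T_iff)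
  qed
qed


lemma step_shear:
  assumes l: "length a = length c" and le: "\<And>i. i < length c \<Longrightarrow> a ! i \<le> c ! i"
  shows "step True (rfl c) (rfl (df c a)) = rv (rfl (step True c a))"
proof (rule nth_equalityI)
  show "length (step True (rfl c) (rfl (df c a))) = length (rv (rfl (step True c a)))" by simp
next
  fix j assume "j < length (step True (rfl c) (rfl (df c a)))"
  hence j: "j < length c" by simp
  let ?k = "length c"
  have h1: "ng ?k j < ?k" "pd ?k j < ?k" "sc ?k (ng ?k j) < ?k" using j by (simp_all add: ng_lt pd_lt sc_lt)
  have e: "ng ?k (pd ?k j) = sc ?k (ng ?k j)" "pd ?k (sc ?k (ng ?k j)) = ng ?k j"
    using j by (simp_all add: ng_pd pd_sc ng_lt)
  have "a ! ng ?k j \<le> c ! ng ?k j" "a ! sc ?k (ng ?k j) \<le> c ! sc ?k (ng ?k j)"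
    using le h1 by auto
  thus "step True (rfl c) (rfl (df c a)) ! j = rv (rfl (step True c a)) ! j"
    using j h1 e l by (simp add: nth_step nth_rfl nth_rv nth_df)
qed

lemma N_shear: "N True (\<lambda>a. True) t (rfl c) = N True (\<lambda>a. True) t c"
proof (induction t arbitrary: c)
  case 0 thus ?case by (simp add: N_0)
next
  case (Suc t)
  have gp: "goodP (\<lambda>a. True)" by (simp add: goodP_def)
  show ?case unfolding N_Suc
  proof (rule sum.reindex_bij_witness[where i="\<lambda>b. df c (rfl b)" and j="\<lambda>a. rfl (df c a)", symmetric])
    fix a assume a: "a \<in> T (\<lambda>a. True) c"
    hence l: "length a = length c" and le: "\<And>i. i < length c \<Longrightarrow> a ! i \<le> c ! i" by (auto simp: T_iff)
    show "df c (rfl (rfl (df c a))) = a"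
      by (rule nth_equalityI) (auto simp: l nth_df le)
    show "rfl (df c a) \<in> T (\<lambda>a. True) (rfl c)"
      by (auto simp: T_iff nth_rfl nth_df ng_lt)
    show "N True (\<lambda>a. True) t (step True (rfl c) (rfl (df c a))) = N True (\<lambda>a. True) t (step True c a)"
      using Suc.IH N_rv[OF gp] by (simp add: step_shear[OF l le])
  next
    fix b assume b: "b \<in> T (\<lambda>a. True) (rfl c)"
    hence l: "length b = length c" and le: "\<And>i. i < length c \<Longrightarrow> b ! i \<le> rfl c ! i" by (auto simp: T_iff)
    have le2: "rfl b ! i \<le> c ! i" if i: "i < length c" for i
      using le[of "ng (length c) i"] i by (simp add: nth_rfl ng_lt ng_ng l)
    show "rfl (df c (df c (rfl b))) = b"
    proof -
      have "df c (df c (rfl b)) = rfl b"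
        by (rule nth_equalityI) (auto simp: l nth_df le2)
      thus ?thesis by simp
    qed
    show "df c (rfl b) \<in> T (\<lambda>a. True) c"
      by (auto simp: T_iff nth_df)
  qed
qed


definition eh :: "nat \<Rightarrow> nat \<Rightarrow> nat list" where "eh k i = (replicate k 0)[i := 1]"
lemma length_eh[simp]: "length (eh k i) = k" by (simp add: eh_def)
lemma nth_eh: "l < k \<Longrightarrow> eh k i ! l = (if l = i then 1 else 0)"
  by (auto simp: eh_def nth_list_update)

lemma one_hot: "sum_list (a :: nat list) = 1 \<Longrightarrow> \<exists>i<length a. a = eh (length a) i"
proof (induction a)
  case Nil thus ?case by simp
next
  case (Cons x xs)
  show ?case
  proof (cases x)
    case 0
    with Cons obtain i where "i < length xs" "xs = eh (length xs) i" by auto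
    thus ?thesis using 0 by (intro exI[of _ "Suc i"]) (simp add: eh_def)
  next
    case (Suc y)
    hence "x = 1" "sum_list xs = 0" using Cons.prems by auto
    hence "xs = replicate (length xs) 0"
      by (simp add: sum_list_eq_0_iff replicate_length_same)
    moreover have "eh (Suc (length xs)) 0 = 1 # replicate (length xs) 0" by (simp add: eh_def)
    ultimately show ?thesis using \<open>x = 1\<close> by (intro exI[of _ 0]) (metis length_Cons zero_less_Suc)
  qed
qed

lemma T_one: "T one_marble c = eh (length c) ` {i. i < length c \<and> 1 \<le> c ! i}"
proof (rule set_eqI)
  fix a
  show "a \<in> T one_marble c \<longleftrightarrow> a \<in> eh (length c) ` {i. i < length c \<and> 1 \<le> c ! i}"
  proof
    assume a: "a \<in> T one_marble c"
    hence l: "length a = length c" and le: "\<forall>i<length c. a ! i \<le> c ! i" and s: "sum_list a = 1"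
      by (auto simp: T_iff one_marble_def)
    obtain i where i: "i < length a" "a = eh (length a) i" using one_hot[OF s] by blast
    have "a ! i = 1" by (subst i(2)) (simp add: nth_eh i(1))
    hence "1 \<le> c ! i" using le i l by (metis)
    thus "a \<in> eh (length c) ` {i. i < length c \<and> 1 \<le> c ! i}" using i l by auto
  next
    assume "a \<in> eh (length c) ` {i. i < length c \<and> 1 \<le> c ! i}"
    then obtain i where i: "i < length c" "1 \<le> c ! i" "a = eh (length c) i" by auto
    have "sum_list a = 1" using i by (simp add: eh_def sum_list_update)
    thus "a \<in> T one_marble c" using i by (auto simp: T_iff one_marble_def nth_eh)
  qed
qed

definition mv :: "nat list \<Rightarrow> nat \<Rightarrow> nat \<Rightarrow> nat list" where
  "mv c i j = map (\<lambda>l. c ! l - (if l = i then 1 else 0) + (if l = j then 1 else 0)) [0..<length c]"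
lemma length_mv[simp]: "length (mv c i j) = length c" by (simp add: mv_def)
lemma nth_mv: "l < length c \<Longrightarrow> mv c i j ! l = c ! l - (if l = i then 1 else 0) + (if l = j then 1 else 0)"
  by (simp add: mv_def)

lemma pd_eq: "l < k \<Longrightarrow> i < k \<Longrightarrow> (pd k l = i) = (l = sc k i)"
  using sc_pd pd_sc by metis
lemma sc_eq: "l < k \<Longrightarrow> i < k \<Longrightarrow> (sc k l = i) = (l = pd k i)"
  using sc_pd pd_sc by metis

lemma step_eh_T: "i < length c \<Longrightarrow> step True c (eh (length c) i) = mv c i (sc (length c) i)"
  by (rule nth_equalityI) (auto simp: nth_step nth_mv nth_eh pd_lt pd_eq)
lemma step_eh_F: "i < length c \<Longrightarrow> step False c (eh (length c) i) = mv c i (pd (length c) i)"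
  by (rule nth_equalityI) (auto simp: nth_step nth_mv nth_eh sc_lt sc_eq)

definition opA :: "(nat list \<Rightarrow> nat) \<Rightarrow> nat list \<Rightarrow> nat" where
  "opA g c = (\<Sum>i<length c. if 1 \<le> c ! i then g (mv c i (sc (length c) i)) else 0)"
definition opB :: "(nat list \<Rightarrow> nat) \<Rightarrow> nat list \<Rightarrow> nat" where
  "opB g c = (\<Sum>i<length c. if 1 \<le> c ! i then g (mv c i (pd (length c) i)) else 0)"

lemma inj_eh: "inj_on (eh k) {i. i < k \<and> P i}"
  by (rule inj_onI) (metis (no_types, lifting) mem_Collect_eq nth_eh one_neq_zero)

lemma N_one_T: "N True one_marble (Suc t) = opA (N True one_marble t)"
proof
  fix c
  have "N True one_marble (Suc t) c = (\<Sum>i\<in>{i. i < length c \<and> 1 \<le> c ! i}. N True one_marble t (step True c (eh (length c) i)))"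
    unfolding N_Suc T_one by (rule sum.reindex[OF inj_eh, unfolded comp_def])
  also have "\<dots> = (\<Sum>i\<in>{i\<in>{..<length c}. 1 \<le> c ! i}. N True one_marble t (mv c i (sc (length c) i)))"
    by (rule sum.cong) (auto simp: step_eh_T)
  also have "\<dots> = opA (N True one_marble t) c"
    unfolding opA_def by (rule sum.inter_filter) simp
  finally show "N True one_marble (Suc t) c = opA (N True one_marble t) c" .
qed

lemma N_one_F: "N False one_marble (Suc t) = opB (N False one_marble t)"
proof
  fix c
  have "N False one_marble (Suc t) c = (\<Sum>i\<in>{i. i < length c \<and> 1 \<le> c ! i}. N False one_marble t (step False c (eh (length c) i)))"
    unfolding N_Suc T_one by (rule sum.reindex[OF inj_eh, unfolded comp_def])
  also have "\<dots> = (\<Sum>i\<in>{i\<in>{..<length c}. 1 \<le> c ! i}. N False one_marble t (mv c i (pd (length c) i)))"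
    by (rule sum.cong) (auto simp: step_eh_F)
  also have "\<dots> = opB (N False one_marble t) c"
    unfolding opB_def by (rule sum.inter_filter) simp
  finally show "N False one_marble (Suc t) c = opB (N False one_marble t) c" .
qed


lemma sum_split_at: "j < k \<Longrightarrow> (\<Sum>p<k. f p) = (\<Sum>p<k. if p = j then 0 else f p) + (f (j::nat) :: nat)"
proof -
  assume j: "j < k"
  have "(\<Sum>p<k. f p) = (\<Sum>p<k. (if p = j then 0 else f p) + (if p = j then f j else 0))"
    by (rule sum.cong) auto
  also have "\<dots> = (\<Sum>p<k. if p = j then 0 else f p) + f j"
    using j by (simp add: sum.distrib)
  finally show ?thesis .
qed

lemma K1:
  assumes i: "i < length c" and p: "p < length c" and ne: "p \<noteq> sc (length c) i"
  shows "(if 1 \<le> c ! i then (if 1 \<le> mv c i (sc (length c) i) ! p then g (mv (mv c i (sc (length c) i)) p (pd (length c) p)) else 0) else 0)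
       = (if 1 \<le> c ! p then (if 1 \<le> mv c p (pd (length c) p) ! i then g (mv (mv c p (pd (length c) p)) i (sc (length c) i)) else 0) else 0)"
proof -
  let ?k = "length c"
  have ne2: "i \<noteq> pd ?k p" using pd_eq[OF p i] ne by simp
  have e1: "mv c i (sc ?k i) ! p = c ! p - (if p = i then 1 else 0)" using nth_mv[OF p] ne by simp
  have e2: "mv c p (pd ?k p) ! i = c ! i - (if i = p then 1 else 0)" using nth_mv[OF i] ne2 by simp
  have cond: "(1 \<le> c ! i \<and> 1 \<le> mv c i (sc ?k i) ! p) = (1 \<le> c ! p \<and> 1 \<le> mv c p (pd ?k p) ! i)"
    unfolding e1 e2 by auto
  have eq: "mv (mv c i (sc ?k i)) p (pd ?k p) = mv (mv c p (pd ?k p)) i (sc ?k i)"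
    if h: "1 \<le> c ! i" "1 \<le> c ! p - (if p = i then 1 else 0)"
  proof (rule nth_equalityI)
    fix l assume "l < length (mv (mv c i (sc ?k i)) p (pd ?k p))"
    hence l: "l < ?k" by simp
    show "mv (mv c i (sc ?k i)) p (pd ?k p) ! l = mv (mv c p (pd ?k p)) i (sc ?k i) ! l"
      using h l by (cases "l = i"; cases "l = p") (auto simp: nth_mv)
  qed simp
  show ?thesis using cond eq e1 by auto
qed

lemma K2:
  assumes i: "i < length c"
  shows "(if 1 \<le> c ! i then (if 1 \<le> mv c i (sc (length c) i) ! (sc (length c) i) then g (mv (mv c i (sc (length c) i)) (sc (length c) i) (pd (length c) (sc (length c) i))) else 0) else 0)
       = (if 1 \<le> c ! i then g c else 0)"
proof -
  let ?k = "length c"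
  have s: "sc ?k i < ?k" "pd ?k (sc ?k i) = i" using i by (simp_all add: sc_lt pd_sc)
  have e1: "1 \<le> mv c i (sc ?k i) ! (sc ?k i)" using nth_mv[OF s(1)] by simp
  have "mv (mv c i (sc ?k i)) (sc ?k i) i = c" if h: "1 \<le> c ! i"
    by (rule nth_equalityI) (use h in \<open>auto simp: nth_mv\<close>)
  thus ?thesis using e1 s by auto
qed

lemma K3:
  assumes i: "i < length c"
  shows "(if 1 \<le> c ! (sc (length c) i) then (if 1 \<le> mv c (sc (length c) i) (pd (length c) (sc (length c) i)) ! i then g (mv (mv c (sc (length c) i) (pd (length c) (sc (length c) i))) i (sc (length c) i)) else 0) else 0)
       = (if 1 \<le> c ! (sc (length c) i) then g c else 0)"
proof -
  let ?k = "length c"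
  have s: "sc ?k i < ?k" "pd ?k (sc ?k i) = i" using i by (simp_all add: sc_lt pd_sc)
  have e1: "1 \<le> mv c (sc ?k i) i ! i" using nth_mv[OF i] by simp
  have "mv (mv c (sc ?k i) i) i (sc ?k i) = c" if h: "1 \<le> c ! (sc ?k i)"
    by (rule nth_equalityI) (use h in \<open>auto simp: nth_mv\<close>)
  thus ?thesis using e1 s by auto
qed


lemma opB_mv: "opB g (mv c i j) = (\<Sum>p<length c. if 1 \<le> mv c i j ! p then g (mv (mv c i j) p (pd (length c) p)) else 0)"
  unfolding opB_def length_mv by simp
lemma opA_mv: "opA g (mv c i j) = (\<Sum>p<length c. if 1 \<le> mv c i j ! p then g (mv (mv c i j) p (sc (length c) p)) else 0)"
  unfolding opA_def length_mv by simp

lemma comm: "opA (opB g) c = opB (opA g) c"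
proof -
  let ?k = "length c"
  define X where "X i p = (if 1 \<le> c ! i then (if 1 \<le> mv c i (sc ?k i) ! p then g (mv (mv c i (sc ?k i)) p (pd ?k p)) else 0) else 0)" for i p
  define Y where "Y i p = (if 1 \<le> c ! p then (if 1 \<le> mv c p (pd ?k p) ! i then g (mv (mv c p (pd ?k p)) i (sc ?k i)) else 0) else 0)" for i p
  have A: "opA (opB g) c = (\<Sum>i<?k. \<Sum>p<?k. X i p)"
    unfolding opA_def opB_mv X_def by (rule sum.cong) auto
  have "opB (opA g) c = (\<Sum>p<?k. \<Sum>i<?k. Y i p)"
    unfolding opB_def opA_mv Y_def by (rule sum.cong) auto
  also have "\<dots> = (\<Sum>i<?k. \<Sum>p<?k. Y i p)" by (rule sum.swap)
  finally have B: "opB (opA g) c = (\<Sum>i<?k. \<Sum>p<?k. Y i p)" .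
  define W where "W i = (\<Sum>p<?k. if p = sc ?k i then 0 else X i p)" for i
  have XA: "(\<Sum>p<?k. X i p) = W i + (if 1 \<le> c ! i then g c else 0)" if i: "i < ?k" for i
    using sum_split_at[OF sc_lt[OF i, where j=i], of "X i"] K2[OF i, of g] unfolding W_def X_def by simp
  have YA: "(\<Sum>p<?k. Y i p) = W i + (if 1 \<le> c ! sc ?k i then g c else 0)" if i: "i < ?k" for i
  proof -
    have "(\<Sum>p<?k. Y i p) = (\<Sum>p<?k. if p = sc ?k i then 0 else Y i p) + Y i (sc ?k i)"
      by (rule sum_split_at[OF sc_lt[OF i]])
    also have "(\<Sum>p<?k. if p = sc ?k i then 0 else Y i p) = W i"
      unfolding W_def
    proof (rule sum.cong[OF refl])
      fix p assume p: "p \<in> {..<?k}"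
      show "(if p = sc ?k i then 0 else Y i p) = (if p = sc ?k i then 0 else X i p)"
      proof (cases "p = sc ?k i")
        case False
        have "X i p = Y i p" unfolding X_def Y_def using K1[OF i _ False, of g] p by simp
        thus ?thesis by simp
      qed simp
    qed
    also have "Y i (sc ?k i) = (if 1 \<le> c ! sc ?k i then g c else 0)"
      using K3[OF i, of g] unfolding Y_def by (simp add: pd_sc i)
    finally show ?thesis .
  qed
  have "opA (opB g) c = (\<Sum>i<?k. W i) + (\<Sum>i<?k. if 1 \<le> c ! i then g c else 0)"
    unfolding A by (simp add: XA sum.distrib)
  also have "(\<Sum>i<?k. if 1 \<le> c ! i then g c else 0) = (\<Sum>i<?k. if 1 \<le> c ! sc ?k i then g c else 0)"
    using sum_perm[of ?k "sc ?k" "pd ?k" "\<lambda>j. if 1 \<le> c ! j then g c else 0", OF perm_pd_sc] by simp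
  also have "(\<Sum>i<?k. W i) + \<dots> = opB (opA g) c"
    unfolding B by (simp add: YA sum.distrib)
  finally show ?thesis .
qed

lemma comm_iter: "(opA ^^ s) (opB g) = opB ((opA ^^ s) g)"
proof (induction s)
  case 0 thus ?case by simp
next
  case (Suc s)
  show ?case by (rule ext) (simp add: Suc comm)
qed

lemma N_one: "N True one_marble t = N False one_marble t"
proof -
  have NT: "N True one_marble t = (opA ^^ t) (\<lambda>_. 1)" for t
    by (induction t) (simp_all add: N_0 N_one_T fun_eq_iff[of "N True one_marble 0"])
  have NF: "N False one_marble t = (opB ^^ t) (\<lambda>_. 1)" for t
    by (induction t) (simp_all add: N_0 N_one_F fun_eq_iff[of "N False one_marble 0"])
  have AB: "opA (\<lambda>_. 1) = opB (\<lambda>_. 1)" by (simp add: opA_def opB_def fun_eq_iff)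
  have "(opA ^^ t) (\<lambda>_. 1) = (opB ^^ t) (\<lambda>_. 1)"
  proof (induction t)
    case 0 thus ?case by simp
  next
    case (Suc t)
    have "(opA ^^ Suc t) (\<lambda>_. 1) = (opA ^^ t) (opA (\<lambda>_. 1))" by (simp add: funpow_Suc_right del: funpow.simps)
    also have "\<dots> = (opA ^^ t) (opB (\<lambda>_. 1))" by (simp only: AB)
    also have "\<dots> = opB ((opA ^^ t) (\<lambda>_. 1))" by (rule comm_iter)
    also have "\<dots> = opB ((opB ^^ t) (\<lambda>_. 1))" by (simp only: Suc.IH)
    finally show ?case by simp
  qed
  thus ?thesis by (simp add: NT NF)
qed


lemma telescope: "(\<Sum>i<j. (\<alpha>::int\<Rightarrow>int) (int i - 1) - \<alpha> (int i)) = \<alpha> (-1) - \<alpha> (int j - 1)"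
  by (induction j) auto

lemma Arr_props:
  assumes "1 \<le> k" "k < n" "cylindric k n \<alpha>"
  shows "length (Arr k \<alpha>) = k" "sum_list (Arr k \<alpha>) = n - k"
proof -
  show "length (Arr k \<alpha>) = k" by (simp add: Arr_def)
  have dec: "\<And>m. \<alpha> (m + 1) \<le> \<alpha> m" and per: "\<And>m. \<alpha> m = \<alpha> (m + int k) + (int n - int k)"
    using assms(3) unfolding cylindric_def by blast+
  have nn: "0 \<le> \<alpha> (int i - 1) - \<alpha> (int i)" for i
    using dec[of "int i - 1"] by simp
  have "int (sum_list (Arr k \<alpha>)) = (\<Sum>i<k. int (nat (\<alpha> (int i - 1) - \<alpha> (int i))))"
    by (simp add: Arr_def sum_list_map_upt)
  also have "\<dots> = (\<Sum>i<k. \<alpha> (int i - 1) - \<alpha> (int i))"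
    using nn by simp
  also have "\<dots> = \<alpha> (-1) - \<alpha> (int k - 1)" by (rule telescope)
  also have "\<dots> = int n - int k"
  proof -
    have "\<alpha> (-1) = \<alpha> (int k - 1) + (int n - int k)"
      using per[of "-1"] by (metis uminus_add_conv_diff)
    thus ?thesis by linarith
  qed
  finally show "sum_list (Arr k \<alpha>) = n - k" using assms(2) by simp
qed

theorem mainTheorem9:
  fixes k n t :: nat and \<alpha> :: "int \<Rightarrow> int"
  assumes "1 \<le> k" and "k < n" and "cylindric k n \<alpha>"
  shows "\<forall>P \<in> {(\<lambda>a. True), one_marble}.
     card (games_starting k n True P t (Arr k \<alpha>)) = card (games_ending k n True P t (Arr k \<alpha>)) \<and>
     card (games_ending k n True P t (Arr k \<alpha>)) = card (games_starting k n False P t (Arr k \<alpha>))"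
proof
  fix P :: "nat list \<Rightarrow> bool" assume P: "P \<in> {(\<lambda>a. True), one_marble}"
  hence gp: "goodP P" by (auto simp: goodP_def)
  note A = Arr_props[OF assms]
  have NN: "N True P t (Arr k \<alpha>) = N False P t (Arr k \<alpha>)"
  proof (cases "P = one_marble")
    case True thus ?thesis by (simp add: N_one)
  next
    case False
    hence "P = (\<lambda>a. True)" using P by auto
    thus ?thesis using N_rfl[OF gp] N_shear by simp
  qed
  show "card (games_starting k n True P t (Arr k \<alpha>)) = card (games_ending k n True P t (Arr k \<alpha>)) \<and>
     card (games_ending k n True P t (Arr k \<alpha>)) = card (games_starting k n False P t (Arr k \<alpha>))"
    using starting_eq[OF A] ending_eq[OF A gp] NN by simp
qed

end
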